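(* Let $n,d\ge1$ be integers and let $A$ be a non-empty subset of $]n[=\{1,\dots,n\}$. If $s_A(\mathbb{Z}_n^d)=d_A(\mathbb{Z}_n^d)+n-1$, then $ZS_A(\mathbb{Z}_n^d)=d_A(\mathbb{Z}_n^d)+n^d-1$.
   Context: For an integer $x\ge1$, $]x[=\{1,2,\dots,x\}$. Let $G$ be a finite abelian group (written additively) of exponent $n$ and let $\emptyset\ne A\subseteq\,]n[$. The constant $d_A(G)$ is the least positive integer $t$ such that for every sequence $g_1,\dots,g_t$ in $G$ there exist $\ell\ge1$, indices $1\le i_1<\dots<i_\ell\le t$ and $a_1,\dots,a_\ell\in A$ (repetitions allowed) with $\sum_{j=1}^{\ell}a_jg_{i_j}=0$. The constant $ZS_A(G)$ (resp. $s_A(G)$) is the least positive integer $t$ such that every sequence $g_1,\dots,g_t$ in $G$ has a subsequence $g_{i_1},\dots,g_{i_m}$ ($i_1<\dots<i_m$) with $m=|G|$ (resp. $m=n$) and elements $a_1,\dots,a_m\in A$ (repetitions allowed) with $\sum_{j=1}^m a_jg_{i_j}=0$ in $G$. *)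

theory Defs
  imports "HOL-Number_Theory.Cong"
begin

text \<open>Elements of Z_n^d are represented by vectors v :: nat => int whose coordinates
  v i (i < d) lie in {0..<n}; group addition is coordinatewise modulo n.
  A sequence of length t in Z_n^d is g :: nat => nat => int, with g j the j-th term (j < t).\<close>

definition in_Znd :: "nat \<Rightarrow> nat \<Rightarrow> (nat \<Rightarrow> int) \<Rightarrow> bool" where
  "in_Znd n d v \<longleftrightarrow> (\<forall>i<d. 0 \<le> v i \<and> v i < int n)"

definition A_zero_sum :: "nat \<Rightarrow> nat \<Rightarrow> int set \<Rightarrow> (nat \<Rightarrow> nat \<Rightarrow> int) \<Rightarrow> nat set \<Rightarrow> bool" where
  "A_zero_sum n d A g I \<longleftrightarrow>
     (\<exists>a :: nat \<Rightarrow> int. (\<forall>j\<in>I. a j \<in> A) \<and>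
        (\<forall>i<d. [(\<Sum>j\<in>I. a j * g j i) = 0] (mod int n)))"

definition seq_Znd :: "nat \<Rightarrow> nat \<Rightarrow> nat \<Rightarrow> (nat \<Rightarrow> nat \<Rightarrow> int) \<Rightarrow> bool" where
  "seq_Znd n d t g \<longleftrightarrow> (\<forall>j<t. in_Znd n d (g j))"

definition dA :: "nat \<Rightarrow> nat \<Rightarrow> int set \<Rightarrow> nat" where
  "dA n d A = (LEAST t. t \<ge> 1 \<and> (\<forall>g. seq_Znd n d t g \<longrightarrow>
      (\<exists>I. I \<subseteq> {..<t} \<and> I \<noteq> {} \<and> A_zero_sum n d A g I)))"

text \<open>s_A(Z_n^d): zero sums of length n (n = exponent of Z_n^d)\<close>
definition sA :: "nat \<Rightarrow> nat \<Rightarrow> int set \<Rightarrow> nat" where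
  "sA n d A = (LEAST t. t \<ge> 1 \<and> (\<forall>g. seq_Znd n d t g \<longrightarrow>
      (\<exists>I. I \<subseteq> {..<t} \<and> card I = n \<and> A_zero_sum n d A g I)))"

text \<open>ZS_A(Z_n^d): zero sums of length |Z_n^d| = n^d\<close>
definition ZSA :: "nat \<Rightarrow> nat \<Rightarrow> int set \<Rightarrow> nat" where
  "ZSA n d A = (LEAST t. t \<ge> 1 \<and> (\<forall>g. seq_Znd n d t g \<longrightarrow>
      (\<exists>I. I \<subseteq> {..<t} \<and> card I = n ^ d \<and> A_zero_sum n d A g I)))"

end

theory Submission
  imports Defs "HOL-Library.FuncSet"
begin

definition Ps :: "nat \<Rightarrow> nat \<Rightarrow> int set \<Rightarrow> nat \<Rightarrow> nat \<Rightarrow> bool" where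
  "Ps n d A m t \<longleftrightarrow> (\<forall>g. seq_Znd n d t g \<longrightarrow>
      (\<exists>I. I \<subseteq> {..<t} \<and> card I = m \<and> A_zero_sum n d A g I))"

lemma exist_s:
  assumes n: "n \<ge> 1" and a0: "a0 \<in> A"
  shows "\<exists>t. t \<ge> 1 \<and> Ps n d A n t"
proof -
  define V where "V = PiE {..<d} (\<lambda>_. {0..<int n})"
  have finV: "finite V" unfolding V_def by (simp add: finite_PiE)
  define L where "L = card V * (n - 1) + 1"
  have "Ps n d A n L"
    unfolding Ps_def
  proof (intro allI impI)
    fix g assume sg: "seq_Znd n d L g"
    define r where "r j = restrict (g j) {..<d}" for j
    have rV: "r j \<in> V" if "j < L" for j
    proof -
      have "\<forall>i<d. 0 \<le> g j i \<and> g j i < int n" using sg that unfolding seq_Znd_def in_Znd_def by blast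
      thus ?thesis unfolding r_def V_def by (simp add: PiE_iff)
    qed
    have "\<exists>v. n \<le> card {j\<in>{..<L}. r j = v}"
    proof (rule ccontr)
      assume nv: "\<not> (\<exists>v. n \<le> card {j\<in>{..<L}. r j = v})"
      have fib: "card {j\<in>{..<L}. r j = v} \<le> n - 1" for v
      proof -
        have "\<not> n \<le> card {j\<in>{..<L}. r j = v}" using nv by blast
        thus ?thesis by arith
      qed
      have eqU: "{..<L} = (\<Union>v\<in>r ` {..<L}. {j\<in>{..<L}. r j = v})" by blast
      have "card (\<Union>v\<in>r ` {..<L}. {j\<in>{..<L}. r j = v}) \<le> (\<Sum>v\<in>r ` {..<L}. card {j\<in>{..<L}. r j = v})"
        by (rule card_UN_le) simp
      hence "card {..<L} \<le> (\<Sum>v\<in>r ` {..<L}. card {j\<in>{..<L}. r j = v})"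
        using eqU by simp
      also have "\<dots> \<le> card (r ` {..<L}) * (n - 1)"
        using sum_bounded_above[of "r ` {..<L}" "\<lambda>v. card {j\<in>{..<L}. r j = v}" "n-1"] fib
        by simp
      also have "\<dots> \<le> card V * (n - 1)"
        using rV finV by (intro mult_right_mono card_mono) auto
      finally show False unfolding L_def by simp
    qed
    then obtain v where v: "n \<le> card {j\<in>{..<L}. r j = v}" by blast
    then obtain I where I: "I \<subseteq> {j\<in>{..<L}. r j = v}" "card I = n"
      by (meson obtain_subset_with_card_n)
    have "A_zero_sum n d A g I"
      unfolding A_zero_sum_def
    proof (intro exI[of _ "\<lambda>_. a0"] conjI ballI allI impI)
      fix i assume i: "i < d"
      have "\<forall>j\<in>I. g j i = v i"
      proof
        fix j assume "j \<in> I"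
        hence "r j = v" using I(1) by blast
        hence "r j i = v i" by simp
        thus "g j i = v i" using i unfolding r_def by simp
      qed
      hence "(\<Sum>j\<in>I. a0 * g j i) = int n * (a0 * v i)" using I(2) by simp
      thus "[(\<Sum>j\<in>I. a0 * g j i) = 0] (mod int n)" by (simp add: cong_0_iff)
    qed (use a0 in auto)
    thus "\<exists>I. I \<subseteq> {..<L} \<and> card I = n \<and> A_zero_sum n d A g I" using I by blast
  qed
  thus ?thesis unfolding L_def by auto
qed

lemma Ps_subset:
  assumes P: "Ps n d A m t" and J: "finite J" "t \<le> card J"
    and gJ: "\<forall>j\<in>J. in_Znd n d (g j)"
  shows "\<exists>I\<subseteq>J. card I = m \<and> A_zero_sum n d A g I"
proof -
  obtain f where f: "bij_betw f {0..<card J} J" using ex_bij_betw_nat_finite[OF J(1)] by blast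
  define g' where "g' j = g (f j)" for j
  have "seq_Znd n d t g'" unfolding seq_Znd_def g'_def
    using f gJ J(2) by (auto simp: bij_betw_def)
  then obtain I' a where I': "I' \<subseteq> {..<t}" "card I' = m" "\<forall>j\<in>I'. a j \<in> A"
    "\<forall>i<d. [(\<Sum>j\<in>I'. a j * g' j i) = 0] (mod int n)"
    using P unfolding Ps_def A_zero_sum_def by blast
  have sub: "I' \<subseteq> {0..<card J}" using I'(1) J(2) by auto
  have inj: "inj_on f I'" using f sub by (meson bij_betw_def inj_on_subset)
  define b where "b = a \<circ> inv_into I' f"
  have bf: "b (f j) = a j" if "j \<in> I'" for j using inj that by (simp add: b_def)
  show ?thesis
  proof (intro exI[of _ "f ` I'"] conjI)
    show "f ` I' \<subseteq> J" using f sub by (auto simp: bij_betw_def)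
    show "card (f ` I') = m" using inj I'(2) by (simp add: card_image)
    show "A_zero_sum n d A g (f ` I')" unfolding A_zero_sum_def
    proof (intro exI[of _ b] conjI ballI allI impI)
      fix i assume "i < d"
      have "(\<Sum>j\<in>f ` I'. b j * g j i) = (\<Sum>j\<in>I'. a j * g' j i)"
      proof -
        have "(\<Sum>j\<in>f ` I'. b j * g j i) = (\<Sum>j\<in>I'. b (f j) * g (f j) i)"
          using sum.reindex[OF inj, of "\<lambda>j. b j * g j i"] by (simp add: comp_def)
        also have "\<dots> = (\<Sum>j\<in>I'. a j * g' j i)"
          by (rule sum.cong) (simp_all add: bf g'_def)
        finally show ?thesis .
      qed
      thus "[(\<Sum>j\<in>f ` I'. b j * g j i) = 0] (mod int n)" using I'(4) \<open>i<d\<close> by simp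
    qed (use I'(3) bf in auto)
  qed
qed

lemma blocks:
  assumes P: "Ps n d A n t"
  shows "finite J \<Longrightarrow> t + k * n \<le> card J \<Longrightarrow> \<forall>j\<in>J. in_Znd n d (g j) \<Longrightarrow>
    \<exists>I\<subseteq>J. card I = (k + 1) * n \<and> A_zero_sum n d A g I"
proof (induction k arbitrary: J)
  case 0
  hence "t \<le> card J" by simp
  thus ?case using Ps_subset[OF P "0.prems"(1) _ "0.prems"(3)] by simp
next
  case (Suc k)
  obtain I1 where I1: "I1 \<subseteq> J" "card I1 = n" "A_zero_sum n d A g I1"
  proof -
    have "t \<le> card J" using Suc.prems(2) by simp
    thus ?thesis using Ps_subset[OF P Suc.prems(1) _ Suc.prems(3)] that by blast
  qed
  have fI1: "finite I1" using I1(1) Suc.prems(1) finite_subset by blast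
  have "card (J - I1) = card J - n" using I1 fI1 by (simp add: card_Diff_subset)
  hence "t + k * n \<le> card (J - I1)" using Suc.prems(2) by simp
  then obtain I2 where I2: "I2 \<subseteq> J - I1" "card I2 = (k+1) * n" "A_zero_sum n d A g I2"
    using Suc.IH[of "J - I1"] Suc.prems(1,3) by blast
  have fI2: "finite I2" using I2(1) Suc.prems(1) by (meson finite_Diff finite_subset)
  have disj: "I1 \<inter> I2 = {}" using I2(1) by auto
  obtain a1 where a1: "\<forall>j\<in>I1. a1 j \<in> A" "\<forall>i<d. [(\<Sum>j\<in>I1. a1 j * g j i) = 0] (mod int n)"
    using I1(3) unfolding A_zero_sum_def by blast
  obtain a2 where a2: "\<forall>j\<in>I2. a2 j \<in> A" "\<forall>i<d. [(\<Sum>j\<in>I2. a2 j * g j i) = 0] (mod int n)"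
    using I2(3) unfolding A_zero_sum_def by blast
  define a where "a j = (if j \<in> I1 then a1 j else a2 j)" for j
  have "A_zero_sum n d A g (I1 \<union> I2)" unfolding A_zero_sum_def
  proof (intro exI[of _ a] conjI ballI allI impI)
    fix i assume i: "i < d"
    have "(\<Sum>j\<in>I1 \<union> I2. a j * g j i) = (\<Sum>j\<in>I1. a j * g j i) + (\<Sum>j\<in>I2. a j * g j i)"
      using sum.union_disjoint[OF fI1 fI2 disj] by simp
    also have "(\<Sum>j\<in>I1. a j * g j i) = (\<Sum>j\<in>I1. a1 j * g j i)"
      by (rule sum.cong) (simp_all add: a_def)
    also have "(\<Sum>j\<in>I2. a j * g j i) = (\<Sum>j\<in>I2. a2 j * g j i)"
      by (rule sum.cong) (use disj in \<open>auto simp: a_def\<close>)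
    finally have e: "(\<Sum>j\<in>I1 \<union> I2. a j * g j i) = (\<Sum>j\<in>I1. a1 j * g j i) + (\<Sum>j\<in>I2. a2 j * g j i)" .
    have "[(\<Sum>j\<in>I1. a1 j * g j i) + (\<Sum>j\<in>I2. a2 j * g j i) = 0 + 0] (mod int n)"
      by (rule cong_add) (use a1(2) a2(2) i in blast)+
    thus "[(\<Sum>j\<in>I1 \<union> I2. a j * g j i) = 0] (mod int n)" using e by simp
  next
    fix j assume "j \<in> I1 \<union> I2"
    thus "a j \<in> A" using a1(1) a2(1) unfolding a_def by auto
  qed
  moreover have "card (I1 \<union> I2) = (Suc k + 1) * n"
    using card_Un_disjoint[OF fI1 fI2 disj] I1(2) I2(2) by simp
  ultimately show ?case using I1(1) I2(1) by blast
qed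

theorem lemma3p1:
  fixes n d :: nat and A :: "int set"
  assumes "n \<ge> 1" and "d \<ge> 1"
    and "A \<noteq> {}" and "A \<subseteq> {1..int n}"
    and "sA n d A = dA n d A + n - 1"
  shows "ZSA n d A = dA n d A + n ^ d - 1"
proof -
  define D where "D = dA n d A"
  define N where "N = n ^ d"
  obtain a0 where a0: "a0 \<in> A" using assms(3) by blast
  have sAeq: "sA n d A = (LEAST t. t \<ge> 1 \<and> Ps n d A n t)"
    unfolding sA_def Ps_def by simp
  have exs: "\<exists>t. t \<ge> 1 \<and> Ps n d A n t" using exist_s[OF assms(1) a0] .
  have Psa: "Ps n d A n (sA n d A)" using LeastI_ex[OF exs] sAeq by simp
  define Pd where "Pd t \<longleftrightarrow> t \<ge> 1 \<and> (\<forall>g. seq_Znd n d t g \<longrightarrow>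
      (\<exists>I. I \<subseteq> {..<t} \<and> I \<noteq> {} \<and> A_zero_sum n d A g I))" for t
  have Deq: "D = (LEAST t. Pd t)" unfolding D_def dA_def Pd_def by simp
  have exd: "\<exists>t. Pd t"
  proof -
    obtain t where t: "t \<ge> 1" "Ps n d A n t" using exs by blast
    have "Pd t" unfolding Pd_def using t assms(1) unfolding Ps_def by (metis card.empty not_one_le_zero)
    thus ?thesis by blast
  qed
  have D1: "D \<ge> 1" using LeastI_ex[OF exd] Deq Pd_def by simp
  have N1: "N \<ge> 1" unfolding N_def using assms(1) by simp
  obtain h where h: "seq_Znd n d (D - 1) h"
    "\<not> (\<exists>I. I \<subseteq> {..<D - 1} \<and> I \<noteq> {} \<and> A_zero_sum n d A h I)"
  proof (cases "D = 1")
    case True thus ?thesis using that[of "\<lambda>_ _. 0"] by (simp add: seq_Znd_def)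
  next
    case False
    hence "\<not> Pd (D - 1)" using not_less_Least[of "D - 1" Pd] Deq D1 by simp
    thus ?thesis using that False D1 unfolding Pd_def by auto
  qed
  define ZP where "ZP t \<longleftrightarrow> t \<ge> 1 \<and> (\<forall>g. seq_Znd n d t g \<longrightarrow>
      (\<exists>I. I \<subseteq> {..<t} \<and> card I = N \<and> A_zero_sum n d A g I))" for t
  have Zeq: "ZSA n d A = (LEAST t. ZP t)" unfolding ZSA_def ZP_def N_def by simp
  have up: "ZP (D + N - 1)"
    unfolding ZP_def
  proof (intro conjI allI impI)
    show "1 \<le> D + N - 1" using D1 N1 by simp
    fix g assume sg: "seq_Znd n d (D + N - 1) g"
    obtain m where m: "N = n * Suc m"
    proof -
      have "n ^ (d - 1) \<ge> 1" using assms(1) by simp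
      then obtain m where "n ^ (d - 1) = Suc m" by (metis Suc_pred' less_le_trans zero_less_one)
      moreover have "N = n * n ^ (d - 1)" unfolding N_def using assms(2)
        by (metis Suc_diff_1 less_le_trans power_Suc zero_less_one)
      ultimately show ?thesis by (intro that[of m]) simp
    qed
    have "\<exists>I\<subseteq>{..<D + N - 1}. card I = (m + 1) * n \<and> A_zero_sum n d A g I"
      using blocks[OF Psa, of "{..<D + N - 1}" m g] sg assms(5) m D1
      by (auto simp: seq_Znd_def D_def algebra_simps)
    thus "\<exists>I. I \<subseteq> {..<D + N - 1} \<and> card I = N \<and> A_zero_sum n d A g I"
      using m by (auto simp: algebra_simps)
  qed
  have low: "D + N - 1 \<le> t" if zt: "ZP t" for t
  proof (rule ccontr)
    assume "\<not> ?thesis"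
    hence tl: "t \<le> D + N - 2" by simp
    define g where "g j = (if j < D - 1 then h j else (\<lambda>_. 0))" for j
    have "seq_Znd n d t g" using h(1) assms(1)
      unfolding seq_Znd_def g_def in_Znd_def by auto
    then obtain I a where I: "I \<subseteq> {..<t}" "card I = N" "\<forall>j\<in>I. a j \<in> A"
      "\<forall>i<d. [(\<Sum>j\<in>I. a j * g j i) = 0] (mod int n)"
      using zt unfolding ZP_def A_zero_sum_def by blast
    define I0 where "I0 = {j\<in>I. j < D - 1}"
    have "I0 \<noteq> {}"
    proof
      assume "I0 = {}"
      have "I \<subseteq> {D - 1..<t}"
      proof
        fix x assume x: "x \<in> I"
        hence "\<not> x < D - 1" using \<open>I0 = {}\<close> unfolding I0_def by blast
        moreover have "x < t" using x I(1) by blast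
        ultimately show "x \<in> {D - 1..<t}" by simp
      qed
      hence "card I \<le> t - (D - 1)" by (metis card_atLeastLessThan card_mono finite_atLeastLessThan)
      thus False using I(2) tl D1 N1 by simp
    qed
    moreover have "A_zero_sum n d A h I0" unfolding A_zero_sum_def
    proof (intro exI[of _ a] conjI ballI allI impI)
      fix i assume i: "i < d"
      have fI: "finite I" using I(1) finite_subset by blast
      have "(\<Sum>j\<in>I. a j * g j i) = (\<Sum>j\<in>I. if j < D - 1 then a j * h j i else 0)"
        by (rule sum.cong) (auto simp: g_def)
      also have "\<dots> = (\<Sum>j\<in>I0. a j * h j i)" unfolding I0_def
        using sum.inter_filter[OF fI, of "\<lambda>j. a j * h j i" "\<lambda>j. j < D - 1"] by simp
      finally have e: "(\<Sum>j\<in>I. a j * g j i) = (\<Sum>j\<in>I0. a j * h j i)" .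
      have "[(\<Sum>j\<in>I. a j * g j i) = 0] (mod int n)" using I(4) i by blast
      thus "[(\<Sum>j\<in>I0. a j * h j i) = 0] (mod int n)" by (simp only: e)
    qed (use I(3) in \<open>auto simp: I0_def\<close>)
    moreover have "I0 \<subseteq> {..<D - 1}" unfolding I0_def by auto
    ultimately show False using h(2) by blast
  qed
  have "(LEAST t. ZP t) = D + N - 1"
    using up low by (intro Least_equality) auto
  thus ?thesis using Zeq D_def N_def by simp
qed

end
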